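(* Let $a>0$ be real and suppose $-a\notin A_1\cup A_\infty$. Then the external ray $R^\infty_a(0)$ and the internal ray $R^0_a(0)$ of $A_1$ land at the same point.
   Context: $f_a(z)=z^2(z+3a/2)$. $A_1$ is the immediate basin of the super-attracting fixed point $0$ and $A_\infty$ the basin of infinity. When $-a\notin A_1$ there is a unique Böttcher map $\phi_a:A_1\to\mathbb D$ with $\phi_a\circ f_a=\phi_a^2$, and internal rays are $R^0_a(t)=\phi_a^{-1}(e^{2\pi it}[0,1))$. When $-a\notin A_\infty$ the external rays $R^\infty_a(t)$ are defined via the Böttcher coordinate at infinity conjugating $f_a$ to $z\mapsto z^3$, normalized tangent to the identity at infinity. *)

theory Defs
  imports "HOL-Analysis.Analysis"
begin

definition fa :: "complex \<Rightarrow> complex \<Rightarrow> complex" where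
  "fa a z = z^2 * (z + 3 * a / 2)"

definition basin0 :: "complex \<Rightarrow> complex set" where
  "basin0 a = {z. (\<lambda>n. (fa a ^^ n) z) \<longlonglongrightarrow> 0}"

definition A1 :: "complex \<Rightarrow> complex set" where
  "A1 a = connected_component_set (basin0 a) 0"

definition Ainf :: "complex \<Rightarrow> complex set" where
  "Ainf a = {z. filterlim (\<lambda>n. (fa a ^^ n) z) at_infinity sequentially}"

definition is_boettcher0 :: "complex \<Rightarrow> (complex \<Rightarrow> complex) \<Rightarrow> bool" where
  "is_boettcher0 a \<phi> \<longleftrightarrow>
     \<phi> holomorphic_on A1 a \<and> bij_betw \<phi> (A1 a) (ball 0 1) \<and>
     (\<forall>z\<in>A1 a. \<phi> (fa a z) = (\<phi> z)^2)"

text \<open>Boettcher coordinate at infinity (globally defined on A_infinity when the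
  free critical point does not escape): conformal isomorphism of A_infinity onto
  the complement of the closed unit disc with psi o f_a = psi^3, tangent to the
  identity at infinity.\<close>
definition is_boettcher_inf :: "complex \<Rightarrow> (complex \<Rightarrow> complex) \<Rightarrow> bool" where
  "is_boettcher_inf a \<psi> \<longleftrightarrow>
     \<psi> holomorphic_on Ainf a \<and> bij_betw \<psi> (Ainf a) (- cball 0 1) \<and>
     (\<forall>z\<in>Ainf a. \<psi> (fa a z) = (\<psi> z)^3) \<and>
     ((\<lambda>z. \<psi> z / z) \<longlongrightarrow> 1) at_infinity"

definition internal_ray_lands ::
  "complex \<Rightarrow> (complex \<Rightarrow> complex) \<Rightarrow> real \<Rightarrow> complex \<Rightarrow> bool" where
  "internal_ray_lands a \<phi> t w \<longleftrightarrow>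
     ((\<lambda>r. inv_into (A1 a) \<phi> (of_real r * exp (2 * pi * \<i> * of_real t))) \<longlongrightarrow> w)
       (at_left 1)"

definition external_ray_lands ::
  "complex \<Rightarrow> (complex \<Rightarrow> complex) \<Rightarrow> real \<Rightarrow> complex \<Rightarrow> bool" where
  "external_ray_lands a \<psi> t w \<longleftrightarrow>
     ((\<lambda>r. inv_into (Ainf a) \<psi> (of_real r * exp (2 * pi * \<i> * of_real t))) \<longlongrightarrow> w)
       (at_right 1)"

end

theory Submission
  imports Defs "HOL-Complex_Analysis.Complex_Analysis"
begin


locale cub =
  fixes a :: real
  assumes apos: "a > 0"
begin

definition b :: real where "b = 3*a/2"
definition fr :: "real \<Rightarrow> real" where "fr x = x^2 * (x + b)"
definition beta :: real where "beta = (sqrt (b^2 + 4) - b) / 2"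

lemma bpos: "b > 0" using apos by (simp add: b_def)

lemma beta_pos: "beta > 0"
proof -
  have "sqrt (b^2) < sqrt (b^2+4)" by (intro real_sqrt_less_mono) simp
  thus ?thesis using bpos by (simp add: beta_def)
qed

lemma beta_eq: "beta * (beta + b) = 1"
proof -
  have s: "(sqrt (b^2+4))^2 = b^2 + 4" by simp
  show ?thesis unfolding beta_def by (simp add: field_simps power2_eq_square)
qed

lemma fr_beta: "fr beta = beta"
  using beta_eq by (simp add: fr_def power2_eq_square algebra_simps)

lemma fr_cont: "continuous_on S fr" unfolding fr_def by (intro continuous_intros)

lemma fr_mono: "0 \<le> x \<Longrightarrow> x \<le> y \<Longrightarrow> fr x \<le> fr y"
  unfolding fr_def using bpos by (intro mult_mono power_mono) auto

lemma fr_pos: "0 < x \<Longrightarrow> 0 < fr x" unfolding fr_def using bpos by simp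

lemma qlt: "0 < x \<Longrightarrow> x < beta \<Longrightarrow> x * (x + b) < 1"
proof -
  assume "0<x" "x<beta"
  hence "x*(x+b) < beta*(beta+b)" using bpos by (intro mult_strict_mono) auto
  thus ?thesis using beta_eq by simp
qed

lemma qgt: "beta < x \<Longrightarrow> x * (x + b) > 1"
proof -
  assume "beta<x"
  hence "x*(x+b) > beta*(beta+b)" using bpos beta_pos by (intro mult_strict_mono) auto
  thus ?thesis using beta_eq by simp
qed

lemma fr_eq: "fr x = x * (x * (x + b))" by (simp add: fr_def power2_eq_square)

lemma fr_lt: "0 < x \<Longrightarrow> x < beta \<Longrightarrow> fr x < x"
  using qlt[of x] by (simp add: fr_eq)

lemma fr_gt: "beta < x \<Longrightarrow> fr x > x"
  using qgt[of x] beta_pos by (simp add: fr_eq)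

lemma iter_small: "0 < x \<Longrightarrow> x < beta \<Longrightarrow> 0 < (fr^^n) x \<and> (fr^^n) x \<le> (x*(x+b))^n * x"
proof (induction n)
  case 0 then show ?case by simp
next
  case (Suc n)
  define y where "y = (fr^^n) x"
  have y: "0 < y" "y \<le> (x*(x+b))^n * x" using Suc by (auto simp: y_def)
  have q: "0 < x*(x+b)" "x*(x+b) < 1" using Suc.prems bpos qlt by auto
  have "(x*(x+b))^n \<le> 1" using q by (intro power_le_one) auto
  hence "(x*(x+b))^n * x \<le> 1 * x" using Suc.prems by (intro mult_right_mono) auto
  hence yx: "y \<le> x" using y by linarith
  have "y*(y+b) \<le> x*(x+b)" using yx y bpos by (intro mult_mono) auto
  hence "fr y \<le> y * (x*(x+b))" unfolding fr_eq using y by (intro mult_left_mono) auto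
  also have "\<dots> \<le> (x*(x+b))^Suc n * x"
  proof -
    have "y * (x*(x+b)) \<le> ((x*(x+b))^n * x) * (x*(x+b))" using y q by (intro mult_right_mono) auto
    thus ?thesis by (simp add: algebra_simps)
  qed
  finally show ?case using fr_pos[OF y(1)] by (simp add: y_def)
qed

lemma iter_big: "beta < x \<Longrightarrow> (fr^^n) x \<ge> (x*(x+b))^n * x"
proof (induction n)
  case 0 then show ?case by simp
next
  case (Suc n)
  define y where "y = (fr^^n) x"
  have q: "1 < x*(x+b)" using Suc.prems qgt by auto
  have "(x*(x+b))^n \<ge> 1" using q by (intro one_le_power) auto
  hence "(x*(x+b))^n * x \<ge> 1 * x" using Suc.prems beta_pos by (intro mult_right_mono) auto
  hence y: "y \<ge> x" using Suc unfolding y_def by linarith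
  have "y*(y+b) \<ge> x*(x+b)" using y Suc.prems beta_pos bpos by (intro mult_mono) auto
  hence "fr y \<ge> y * (x*(x+b))" unfolding fr_eq using y Suc.prems beta_pos by (intro mult_left_mono) auto
  moreover have "y * (x*(x+b)) \<ge> (x*(x+b))^Suc n * x"
  proof -
    have "(x*(x+b))^n * x \<le> y" using Suc unfolding y_def by simp
    hence "((x*(x+b))^n * x) * (x*(x+b)) \<le> y * (x*(x+b))" using q by (intro mult_right_mono) auto
    thus ?thesis by (simp add: algebra_simps)
  qed
  ultimately show ?case by (simp add: y_def)
qed

lemma iter_small_lim: "0 < x \<Longrightarrow> x < beta \<Longrightarrow> (\<lambda>n. (fr^^n) x) \<longlonglongrightarrow> 0"
proof -
  assume h: "0 < x" "x < beta"
  have q: "0 < x*(x+b)" "x*(x+b) < 1" using h bpos qlt by auto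
  have "(\<lambda>n. (x*(x+b))^n * x) \<longlonglongrightarrow> 0 * x"
    by (intro tendsto_mult LIMSEQ_power_zero tendsto_const) (use q in auto)
  hence lim: "(\<lambda>n. (x*(x+b))^n * x) \<longlonglongrightarrow> 0" by simp
  show ?thesis
  proof (rule real_tendsto_sandwich[of "\<lambda>_. 0" _ _ "\<lambda>n. (x*(x+b))^n * x"])
    show "eventually (\<lambda>n. 0 \<le> (fr^^n) x) sequentially" using iter_small[OF h] by (simp add: less_imp_le)
    show "eventually (\<lambda>n. (fr^^n) x \<le> (x*(x+b))^n * x) sequentially" using iter_small[OF h] by simp
  qed (use lim in auto)
qed

lemma iter_big_lim: "beta < x \<Longrightarrow> filterlim (\<lambda>n. (fr^^n) x) at_top sequentially"
proof -
  assume h: "beta < x"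
  have q: "1 < x*(x+b)" using h qgt by auto
  have xp: "x > 0" using h beta_pos by simp
  show ?thesis unfolding filterlim_at_top eventually_sequentially
  proof
    fix Z :: real
    obtain N where N: "Z / x < (x*(x+b))^N" using real_arch_pow[OF q] by blast
    show "\<exists>N. \<forall>n\<ge>N. Z \<le> (fr ^^ n) x"
    proof (intro exI allI impI)
      fix n assume "N \<le> n"
      hence "(x*(x+b))^N \<le> (x*(x+b))^n" using q by (intro power_increasing) auto
      hence "(x*(x+b))^N * x \<le> (x*(x+b))^n * x" using xp by (intro mult_right_mono) auto
      moreover have "Z < (x*(x+b))^N * x" using N xp by (simp add: divide_less_eq)
      ultimately have "Z < (x*(x+b))^n * x" by linarith
      thus "Z \<le> (fr ^^ n) x" using iter_big[OF h, of n] by simp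
    qed
  qed
qed

end



context cub begin

abbreviation "A \<equiv> complex_of_real a"
abbreviation "F \<equiv> fa A"

lemma F_real: "F (of_real x) = of_real (fr x)"
  by (simp add: fa_def fr_def b_def)

lemma Fiter_real: "(F ^^ n) (of_real x) = of_real ((fr ^^ n) x)"
  by (induction n) (auto simp: F_real)

lemma F_cont: "continuous_on S (F ^^ n)"
proof (induction n)
  case 0 then show ?case by (simp add: continuous_on_id)
next
  case (Suc n)
  have "continuous_on UNIV F" unfolding fa_def by (intro continuous_intros)
  hence "continuous_on S (F \<circ> (F^^n))"
    using Suc by (intro continuous_on_compose) (auto intro: continuous_on_subset)
  thus ?case by (simp add: comp_def)
qed

definition r0 :: real where "r0 = min 1 (1 / (2 * (1 + b)))"

lemma r0_pos: "r0 > 0" using bpos by (simp add: r0_def)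

lemma F_contract: assumes "norm z \<le> r0" shows "norm (F z) \<le> norm z / 2"
proof -
  have nb: "norm (3 * A / 2) = b" using apos by (simp add: b_def norm_divide norm_mult)
  have "norm (F z) = norm z ^ 2 * norm (z + 3*A/2)" by (simp add: fa_def norm_mult norm_power)
  also have "norm (z + 3*A/2) \<le> norm z + b" using norm_triangle_ineq[of z "3*A/2"] nb by simp
  hence "norm z ^ 2 * norm (z + 3*A/2) \<le> norm z ^ 2 * (norm z + b)" by (intro mult_left_mono) auto
  also have "norm z ^ 2 * (norm z + b) = norm z * (norm z * (norm z + b))" by (simp add: power2_eq_square)
  also have z1: "norm z \<le> 1" using assms by (simp add: r0_def)
  have "norm z * (norm z + b) \<le> r0 * (1 + b)"
    using assms r0_pos bpos z1 by (intro mult_mono) auto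
  hence "norm z * (norm z * (norm z + b)) \<le> norm z * (r0 * (1 + b))" by (intro mult_left_mono) auto
  also have "r0 * (1+b) \<le> 1/2"
  proof -
    have "r0 \<le> 1 / (2 * (1 + b))" by (simp add: r0_def)
    hence "r0 * (1+b) \<le> 1 / (2 * (1 + b)) * (1+b)" using bpos by (intro mult_right_mono) auto
    hence "r0 * (2*(1+b)) \<le> 1" using bpos by (simp add: le_divide_eq)
    thus ?thesis by (simp add: algebra_simps)
  qed
  hence "norm z * (r0 * (1 + b)) \<le> norm z * (1/2)" by (intro mult_left_mono) auto
  finally show ?thesis by simp
qed

lemma Fiter_contract: "norm z \<le> r0 \<Longrightarrow> norm ((F^^n) z) \<le> norm z / 2^n"
proof (induction n)
  case 0 then show ?case by simp
next
  case (Suc n)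
  have "norm z / 2^n \<le> norm z / 1" by (intro divide_left_mono) auto
  hence "norm ((F^^n) z) \<le> r0" using Suc by simp
  hence "norm ((F^^Suc n) z) \<le> norm ((F^^n) z) / 2" using F_contract by simp
  also have "\<dots> \<le> norm z / 2^n / 2" using Suc by simp
  finally show ?case by simp
qed

lemma small_in_basin: "norm z \<le> r0 \<Longrightarrow> (\<lambda>n. (F^^n) z) \<longlonglongrightarrow> 0"
proof -
  assume h: "norm z \<le> r0"
  have "(\<lambda>n. norm z / 2^n) \<longlonglongrightarrow> 0"
    by (intro tendsto_divide_0[OF tendsto_const] filterlim_realpow_sequentially_gt1) auto
  hence lim: "(\<lambda>n. norm z / 2^n) \<longlonglongrightarrow> 0" .
  have "(\<lambda>n. norm ((F^^n) z)) \<longlonglongrightarrow> 0"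
  proof (rule real_tendsto_sandwich[of "\<lambda>_. 0" _ _ "\<lambda>n. norm z / 2^n"])
    show "eventually (\<lambda>n. 0 \<le> norm ((F^^n) z)) sequentially" by simp
    show "eventually (\<lambda>n. norm ((F^^n) z) \<le> norm z / 2^n) sequentially"
      using Fiter_contract[OF h] by simp
  qed (use lim in auto)
  thus ?thesis by (simp add: tendsto_norm_zero_iff)
qed

lemma basin0_eq: "basin0 A = (\<Union>n. (F^^n) -` ball 0 r0)"
proof safe
  fix z assume "z \<in> basin0 A"
  hence "(\<lambda>n. (F^^n) z) \<longlonglongrightarrow> 0" by (simp add: basin0_def)
  hence "eventually (\<lambda>n. (F^^n) z \<in> ball 0 r0) sequentially"
    using r0_pos by (intro topological_tendstoD) auto
  then obtain n where "(F^^n) z \<in> ball 0 r0" by (auto simp: eventually_sequentially)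
  thus "z \<in> (\<Union>n. (F^^n) -` ball 0 r0)" by auto
next
  fix z n assume "(F^^n) z \<in> ball 0 r0"
  hence "(\<lambda>m. (F^^m) ((F^^n) z)) \<longlonglongrightarrow> 0" by (intro small_in_basin) auto
  hence "(\<lambda>m. (F^^(m+n)) z) \<longlonglongrightarrow> 0" by (simp add: funpow_add)
  hence "(\<lambda>m. (F^^m) z) \<longlonglongrightarrow> 0" by (rule LIMSEQ_offset)
  thus "z \<in> basin0 A" by (simp add: basin0_def)
qed

lemma basin0_open: "open (basin0 A)"
proof -
  have "open ((F^^n) -` ball 0 r0)" for n
    using F_cont[of UNIV n] by (intro open_vimage) (auto simp: continuous_on_eq_continuous_at)
  thus ?thesis unfolding basin0_eq by auto
qed

lemma A1_open: "open (A1 A)" unfolding A1_def by (intro open_connected_component basin0_open)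

lemma seg_basin: "0 \<le> x \<Longrightarrow> x < beta \<Longrightarrow> of_real x \<in> basin0 A"
proof -
  assume h: "0 \<le> x" "x < beta"
  show ?thesis
  proof (cases "x = 0")
    case True
    have "(F^^n) 0 = 0" for n by (induction n) (simp_all add: fa_def)
    thus ?thesis using True by (simp add: basin0_def)
  next
    case False
    hence "(\<lambda>n. (fr^^n) x) \<longlonglongrightarrow> 0" using h False by (intro iter_small_lim) auto
    hence "(\<lambda>n. complex_of_real ((fr^^n) x)) \<longlonglongrightarrow> of_real 0" by (intro tendsto_of_real)
    thus ?thesis by (simp add: basin0_def Fiter_real)
  qed
qed

lemma seg_A1: "0 \<le> x \<Longrightarrow> x < beta \<Longrightarrow> of_real x \<in> A1 A"
proof -
  assume h: "0 \<le> x" "x < beta"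
  let ?T = "complex_of_real ` {0..<beta}"
  have "connected ?T" by (intro connected_continuous_image continuous_on_of_real continuous_on_id connected_Ico)
  moreover have "?T \<subseteq> basin0 A" using seg_basin by auto
  moreover have "0 \<in> ?T" using beta_pos by force
  ultimately have "?T \<subseteq> A1 A" unfolding A1_def
    by (intro connected_component_maximal)
  thus ?thesis using h by auto
qed

lemma ray_Ainf: "beta < x \<Longrightarrow> of_real x \<in> Ainf A"
proof -
  assume h: "beta < x"
  have "filterlim (\<lambda>n. complex_of_real ((fr^^n) x)) at_infinity sequentially"
    by (rule filterlim_compose[OF filterlim_of_real_at_infinity iter_big_lim[OF h]])
  thus ?thesis by (simp add: Ainf_def Fiter_real)
qed

lemma beta_notin: "of_real beta \<notin> A1 A" "of_real beta \<notin> Ainf A"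
proof -
  have c0: "(fr^^n) beta = beta" for n by (induction n) (simp_all add: fr_beta)
  have c: "(F^^n) (of_real beta) = of_real beta" for n by (simp add: Fiter_real c0)
  have "\<not> (\<lambda>n. complex_of_real beta) \<longlonglongrightarrow> 0"
  proof
    assume "(\<lambda>n. complex_of_real beta) \<longlonglongrightarrow> 0"
    hence "complex_of_real beta = 0" by (simp add: LIMSEQ_const_iff)
    thus False using beta_pos by simp
  qed
  hence "of_real beta \<notin> basin0 A" by (simp add: basin0_def c)
  thus "of_real beta \<notin> A1 A" unfolding A1_def using connected_component_subset by blast
  show "of_real beta \<notin> Ainf A"
  proof
    assume "of_real beta \<in> Ainf A"
    hence "filterlim (\<lambda>n. complex_of_real beta) at_infinity sequentially" by (simp add: Ainf_def c)
    moreover have "(\<lambda>n. complex_of_real beta) \<longlonglongrightarrow> of_real beta" by simp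
    ultimately show False using not_tendsto_and_filterlim_at_infinity[of sequentially] by auto
  qed
qed

end



lemma Arg_pow:
  assumes "z \<noteq> 0" "real n * \<bar>Arg z\<bar> < pi"
  shows "Arg (z ^ n) = real n * Arg z"
proof -
  have z: "z = of_real (norm z) * exp (\<i> * of_real (Arg z))" using Arg_eq[OF assms(1)] by simp
  have "z ^ n = of_real (norm z ^ n) * exp (of_nat n * (\<i> * of_real (Arg z)))"
    by (subst z) (simp add: power_mult_distrib exp_of_nat_mult)
  also have "of_nat n * (\<i> * of_real (Arg z)) = \<i> * of_real (real n * Arg z)" by simp
  finally have e: "of_real (norm z ^ n) * exp (\<i> * of_real (real n * Arg z)) = z ^ n" ..
  have b1: "- pi < real n * Arg z" "real n * Arg z \<le> pi"
  proof -
    have "\<bar>real n * Arg z\<bar> < pi" using assms(2) by (simp add: abs_mult)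
    thus "- pi < real n * Arg z" "real n * Arg z \<le> pi" by auto
  qed
  show ?thesis by (rule Arg_unique[OF e]) (use assms(1) b1 in auto)
qed

lemma Arg_zero_all:
  assumes "\<And>n. \<bar>(k::real) ^ n * t\<bar> < c" "k > 1"
  shows "t = 0"
proof (rule ccontr)
  assume "t \<noteq> 0"
  hence tp: "\<bar>t\<bar> > 0" by simp
  obtain n where "c / \<bar>t\<bar> < k ^ n" using real_arch_pow[OF assms(2)] by blast
  hence "c < k ^ n * \<bar>t\<bar>" using tp by (simp add: divide_less_eq)
  moreover have "\<bar>k ^ n * t\<bar> = k^n * \<bar>t\<bar>" using assms(2) by (simp add: abs_mult)
  ultimately show False using assms(1)[of n] by simp
qed

lemma real_pos_of_Arg0: "z \<noteq> 0 \<Longrightarrow> Arg z = 0 \<Longrightarrow> z = of_real (norm z)"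
  by (metis Arg_eq exp_zero mult.right_neutral mult_zero_right of_real_0)

context cub begin

lemma orbit_ge: "beta < x \<Longrightarrow> x \<le> (fr^^n) x"
proof (induction n)
  case 0 then show ?case by simp
next
  case (Suc n)
  hence "beta < (fr^^n) x" by simp
  hence "(fr^^n) x < fr ((fr^^n) x)" by (rule fr_gt)
  thus ?case using Suc by simp
qed

lemma fr_nonneg: "0 \<le> y \<Longrightarrow> 0 \<le> fr y" unfolding fr_def using bpos by simp

lemma iter_mono: "0 \<le> x \<Longrightarrow> x \<le> y \<Longrightarrow> (fr^^n) x \<le> (fr^^n) y \<and> 0 \<le> (fr^^n) x"
proof (induction n)
  case 0 then show ?case by simp
next
  case (Suc n)
  hence "fr ((fr^^n) x) \<le> fr ((fr^^n) y)" by (intro fr_mono) auto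
  moreover have "0 \<le> fr ((fr^^n) x)" using Suc by (intro fr_nonneg) auto
  ultimately show ?case by simp
qed

end

locale cubpsi = cub +
  fixes \<psi> :: "complex \<Rightarrow> complex"
  assumes bpsi: "is_boettcher_inf (complex_of_real a) \<psi>"
begin

lemma psi_cont: "continuous_on (Ainf A) \<psi>"
  using bpsi by (intro holomorphic_on_imp_continuous_on) (simp add: is_boettcher_inf_def)

lemma psi_inj: "inj_on \<psi> (Ainf A)"
  using bpsi by (simp add: is_boettcher_inf_def bij_betw_def)

lemma psi_norm: "z \<in> Ainf A \<Longrightarrow> norm (\<psi> z) > 1"
proof -
  assume z: "z \<in> Ainf A"
  have "\<psi> ` Ainf A = - cball 0 1" using bpsi unfolding is_boettcher_inf_def bij_betw_def by auto
  hence "\<psi> z \<in> - cball 0 1" using z by blast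
  thus ?thesis by simp
qed

lemma psi_eq: "z \<in> Ainf A \<Longrightarrow> \<psi> (F z) = \<psi> z ^ 3"
  using bpsi unfolding is_boettcher_inf_def by auto

lemma psi_lim: "((\<lambda>z. \<psi> z / z) \<longlongrightarrow> 1) at_infinity"
  using bpsi unfolding is_boettcher_inf_def by auto

lemma psi_iter: "beta < x \<Longrightarrow> \<psi> (of_real ((fr^^n) x)) = \<psi> (of_real x) ^ (3^n)"
proof (induction n)
  case 0 then show ?case by simp
next
  case (Suc n)
  have m: "beta < (fr^^n) x" using orbit_ge[OF Suc.prems, of n] Suc.prems by simp
  have "\<psi> (of_real ((fr^^Suc n) x)) = \<psi> (F (of_real ((fr^^n) x)))" by (simp add: F_real)
  also have "\<dots> = \<psi> (of_real ((fr^^n) x)) ^ 3" using ray_Ainf[OF m] by (rule psi_eq)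
  also have "\<dots> = \<psi> (of_real x) ^ (3^Suc n)" using Suc by (simp add: power_mult[symmetric] mult.commute)
  finally show ?case .
qed

lemma psi_sector: "\<exists>X. beta < X \<and> (\<forall>x\<ge>X. \<bar>Arg (\<psi> (of_real x))\<bar> < pi / 6)"
proof -
  have "((\<lambda>x. \<psi> (of_real x) / of_real x) \<longlongrightarrow> 1) at_top"
    by (rule filterlim_compose[OF psi_lim filterlim_of_real_at_infinity])
  hence "((\<lambda>x. Arg (\<psi> (of_real x) / of_real x)) \<longlongrightarrow> Arg 1) at_top"
    by (intro tendsto_Arg) (auto simp: nonpos_Reals_def)
  hence "eventually (\<lambda>x. dist (Arg (\<psi> (of_real x) / of_real x)) 0 < pi / 6) at_top"
    by (intro tendstoD) auto
  moreover have "eventually (\<lambda>x::real. x > 0) at_top" by (rule eventually_gt_at_top)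
  ultimately have "eventually (\<lambda>x. \<bar>Arg (\<psi> (of_real x))\<bar> < pi / 6) at_top"
    by eventually_elim (simp add: dist_real_def)
  then obtain X0 where X0: "\<forall>x\<ge>X0. \<bar>Arg (\<psi> (of_real x))\<bar> < pi / 6"
    by (auto simp: eventually_at_top_linorder)
  show ?thesis using X0 by (intro exI[of _ "max X0 (beta + 1)"]) auto
qed

lemma psi_real_far:
  obtains X where "beta < X" "\<And>x. X \<le> x \<Longrightarrow> \<psi> (of_real x) = of_real (norm (\<psi> (of_real x)))"
proof -
  obtain X where X: "beta < X" "\<And>x. X \<le> x \<Longrightarrow> \<bar>Arg (\<psi> (of_real x))\<bar> < pi / 6"
    using psi_sector by blast
  have nz: "\<psi> (of_real y) \<noteq> 0" if "beta < y" for y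
    using psi_norm[OF ray_Ainf[OF that]] by auto
  have "\<psi> (of_real x) = of_real (norm (\<psi> (of_real x)))" if x: "X \<le> x" for x
  proof -
    have xb: "beta < x" using x X by simp
    have it: "Arg (\<psi> (of_real ((fr^^n) x))) = 3^n * Arg (\<psi> (of_real x))" for n
    proof (induction n)
      case 0 then show ?case by simp
    next
      case (Suc n)
      have ge: "X \<le> (fr^^n) x" using orbit_ge[OF xb, of n] x by simp
      have "\<psi> (of_real ((fr^^Suc n) x)) = \<psi> (of_real ((fr^^n) x)) ^ 3"
        using psi_iter[OF xb, of "Suc n"] psi_iter[OF xb, of n] by (simp add: power_mult[symmetric] mult.commute)
      hence "Arg (\<psi> (of_real ((fr^^Suc n) x))) = real 3 * Arg (\<psi> (of_real ((fr^^n) x)))"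
        using Arg_pow[of "\<psi> (of_real ((fr^^n) x))" 3] nz[of "(fr^^n) x"] X(2)[OF ge] X(1) ge by simp
      thus ?case using Suc by simp
    qed
    have "\<bar>(3::real) ^ n * Arg (\<psi> (of_real x))\<bar> < pi / 6" for n
      using X(2)[of "(fr^^n) x"] orbit_ge[OF xb, of n] x it[of n] by simp
    hence "Arg (\<psi> (of_real x)) = 0" by (rule Arg_zero_all) simp
    thus ?thesis using nz[OF xb] real_pos_of_Arg0 by blast
  qed
  thus ?thesis using X(1) that by blast
qed

end



lemma div_norm1:
  fixes w :: complex
  assumes e: "w = of_real (norm w)" and nz: "w \<noteq> 0"
  shows "w / of_real (norm w) = 1"
proof -
  have "(of_real (norm w) :: complex) \<noteq> 0" using nz by simp
  thus ?thesis using e by (metis divide_self)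
qed

context cubpsi begin

lemma psi_ofreal_cont: "continuous_on {x..} (\<lambda>y. \<psi> (of_real y))" if "beta < x"
proof -
  have "complex_of_real ` {x..} \<subseteq> Ainf A" using that ray_Ainf by auto
  thus ?thesis
    by (intro continuous_on_compose2[OF psi_cont continuous_on_of_real[OF continuous_on_id]]) auto
qed

lemma psi_real: assumes xb: "beta < x" shows "\<psi> (of_real x) = of_real (norm (\<psi> (of_real x)))"
proof -
  obtain X where X: "beta < X" "\<And>x. X \<le> x \<Longrightarrow> \<psi> (of_real x) = of_real (norm (\<psi> (of_real x)))"
    using psi_real_far by blast
  have "eventually (\<lambda>n. X \<le> (fr^^n) x) sequentially"
    using iter_big_lim[OF xb] by (simp add: filterlim_at_top)
  then obtain n where n: "X \<le> (fr^^n) x" by (auto simp: eventually_sequentially)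
  have nz: "\<psi> (of_real y) \<noteq> 0" if "beta < y" for y
    using psi_norm[OF ray_Ainf[OF that]] by auto
  define h where "h y = \<psi> (of_real y) / of_real (norm (\<psi> (of_real y)))" for y
  have hroot: "h y ^ (3^n) = 1" if y: "y \<in> {x..}" for y
  proof -
    have yb: "beta < y" using y xb by simp
    have "(fr^^n) x \<le> (fr^^n) y" using iter_mono[of x y n] xb beta_pos y by simp
    hence Xle: "X \<le> (fr^^n) y" using n by simp
    have "h y ^ (3^n) = \<psi> (of_real y) ^ (3^n) / of_real (norm (\<psi> (of_real y) ^ (3^n)))"
      by (simp add: h_def power_divide norm_power)
    also have "\<dots> = \<psi> (of_real ((fr^^n) y)) / of_real (norm (\<psi> (of_real ((fr^^n) y))))"
      using psi_iter[OF yb, of n] by simp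
    also have "\<dots> = 1"
      using X(2)[OF Xle] nz[of "(fr^^n) y"] orbit_ge[OF yb, of n] yb
      by (intro div_norm1) auto
    finally show ?thesis .
  qed
  have cont: "continuous_on {x..} h"
    unfolding h_def using psi_ofreal_cont[OF xb] nz xb
    by (intro continuous_intros) auto
  have fin: "finite (h ` {x..})"
    by (rule finite_subset[OF _ finite_roots_unity[of "3^n"]]) (use hroot in auto)
  have "h constant_on {x..}"
    by (rule continuous_finite_range_constant[OF connected_Ici cont fin])
  moreover have "h (max x X) = 1"
    using X(2)[of "max x X"] nz[of "max x X"] X(1) unfolding h_def
    by (intro div_norm1) auto
  ultimately have "h x = 1" unfolding constant_on_def by (metis atLeast_iff max.cobounded1 order_refl)
  thus ?thesis using nz[OF xb] unfolding h_def by (simp add: divide_eq_1_iff)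
qed

end



context cubpsi begin

definition P :: "real \<Rightarrow> real" where "P x = norm (\<psi> (of_real x))"

lemma P_cont: "beta < s \<Longrightarrow> continuous_on {s..t} P"
  unfolding P_def by (rule continuous_on_norm[OF continuous_on_subset[OF psi_ofreal_cont]]) auto

lemma P_gt1: "beta < x \<Longrightarrow> P x > 1"
  unfolding P_def using psi_norm ray_Ainf by blast

lemma P_inj: "beta < x \<Longrightarrow> beta < y \<Longrightarrow> P x = P y \<Longrightarrow> x = y"
proof -
  assume h: "beta < x" "beta < y" "P x = P y"
  have "\<psi> (of_real x) = \<psi> (of_real y)" using psi_real[OF h(1)] psi_real[OF h(2)] h(3) by (simp add: P_def)
  hence "complex_of_real x = of_real y" using psi_inj ray_Ainf h by (meson inj_onD)
  thus ?thesis by simp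
qed

lemma P_fr: "beta < x \<Longrightarrow> P (fr x) = P x ^ 3"
  using psi_iter[of x 1] by (simp add: P_def norm_power)

lemma P_big: "\<exists>x0>beta. \<forall>x\<ge>x0. Z \<le> P x"
proof -
  have "((\<lambda>x. \<psi> (of_real x) / of_real x) \<longlongrightarrow> 1) at_top"
    by (rule filterlim_compose[OF psi_lim filterlim_of_real_at_infinity])
  hence "((\<lambda>x. norm (\<psi> (of_real x) / of_real x)) \<longlongrightarrow> norm (1::complex)) at_top"
    by (rule tendsto_norm)
  hence "eventually (\<lambda>x. dist (norm (\<psi> (of_real x) / of_real x)) 1 < 1/2) at_top"
    by (intro tendstoD) auto
  moreover have "eventually (\<lambda>x::real. x \<ge> max 1 (2 * Z)) at_top" by (rule eventually_ge_at_top)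
  ultimately have "eventually (\<lambda>x. Z \<le> P x) at_top"
  proof eventually_elim
    case (elim x)
    hence xp: "x > 0" by simp
    have "norm (\<psi> (of_real x) / of_real x) \<ge> 1/2" using elim(1) unfolding dist_real_def by arith
    hence "P x / x \<ge> 1/2" using xp by (simp add: P_def norm_divide)
    hence "P x \<ge> x / 2" using xp by (simp add: le_divide_eq)
    thus ?case using elim(2) by simp
  qed
  then obtain x0 where "\<forall>x\<ge>x0. Z \<le> P x" by (auto simp: eventually_at_top_linorder)
  thus ?thesis by (intro exI[of _ "max x0 (beta+1)"]) auto
qed

lemma fr_surj_up: "beta < x \<Longrightarrow> \<exists>y>beta. fr y = x"
proof -
  assume x: "beta < x"
  have "\<exists>y. beta \<le> y \<and> y \<le> x \<and> fr y = x"
    using fr_gt[OF x] x fr_beta by (intro IVT' fr_cont) auto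
  then obtain y where y: "beta \<le> y" "fr y = x" by blast
  hence "y \<noteq> beta" using x fr_beta by auto
  thus ?thesis using y by (intro exI[of _ y]) auto
qed

lemma P_inf: "e > 0 \<Longrightarrow> \<exists>x>beta. P x < 1 + e"
proof (rule ccontr)
  assume e: "e > 0" and "\<not> (\<exists>x>beta. P x < 1 + e)"
  hence ge: "\<And>x. beta < x \<Longrightarrow> 1 + e \<le> P x" by force
  have pw: "\<And>x. beta < x \<Longrightarrow> (1 + e) ^ (3^n) \<le> P x" for n
  proof (induction n)
    case 0 then show ?case using ge by simp
  next
    case (Suc n)
    fix x assume x: "beta < x"
    obtain y where y: "beta < y" "fr y = x" using fr_surj_up[OF x] by blast
    have "(1+e)^(3^n) \<le> P y" using Suc.IH[OF y(1)] .
    hence "((1+e)^(3^n))^3 \<le> P y ^ 3" using e by (intro power_mono) auto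
    also have "P y ^ 3 = P x" using P_fr[OF y(1)] y(2) by simp
    finally show "(1 + e) ^ (3^Suc n) \<le> P x" by (simp add: power_mult[symmetric] mult.commute)
  qed
  obtain n where n: "P (beta+1) < (1+e)^n" using real_arch_pow[of "1+e" "P (beta+1)"] e by auto
  have "(1+e)^n \<le> (1+e)^(3^n)" using e by (intro power_increasing) (auto intro: less_imp_le[OF less_exp[of n]] order.trans[OF _ power_increasing[of 2 3 "3::nat"]])
  thus False using pw[of "beta+1" n] n by simp
qed

lemma P_mono: "beta < x \<Longrightarrow> x < y \<Longrightarrow> P x < P y"
proof (rule ccontr)
  assume h: "beta < x" "x < y" "\<not> P x < P y"
  hence neq: "P x \<noteq> P y" using P_inj[of x y] by auto
  hence lt: "P y < P x" using h by simp
  obtain t where t: "t > beta" "\<forall>z\<ge>t. P x + 1 \<le> P z" using P_big by blast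
  define t' where "t' = max t y"
  have "P x + 1 \<le> P t'" using t by (simp add: t'_def)
  hence "P y \<le> P x" "P x \<le> P t'" using lt by auto
  hence "\<exists>s. y \<le> s \<and> s \<le> t' \<and> P s = P x"
    using h by (intro IVT' P_cont) (auto simp: t'_def)
  then obtain s where "y \<le> s" "P s = P x" by blast
  thus False using P_inj[of s x] h by auto
qed

lemma P_surj: "1 < r \<Longrightarrow> \<exists>x>beta. P x = r"
proof -
  assume r: "1 < r"
  obtain x1 where x1: "x1 > beta" "P x1 < r" using P_inf[of "r - 1"] r by auto
  obtain t where t: "t > beta" "\<forall>z\<ge>t. r \<le> P z" using P_big by blast
  define x2 where "x2 = max t x1"
  have "\<exists>s. x1 \<le> s \<and> s \<le> x2 \<and> P s = r"
    using x1 t by (intro IVT' P_cont) (auto simp: x2_def less_imp_le)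
  then obtain s where "x1 \<le> s" "P s = r" by blast
  thus ?thesis using x1 by (intro exI[of _ s]) auto
qed

lemma external_land: "external_ray_lands A \<psi> 0 (of_real beta)"
  unfolding external_ray_lands_def
proof (subst tendsto_iff, intro allI impI)
  fix e :: real assume e: "e > 0"
  define t where "t = beta + e / 2"
  have tb: "beta < t" using e by (simp add: t_def)
  show "eventually (\<lambda>r. dist (inv_into (Ainf A) \<psi> (of_real r * exp (2 * pi * \<i> * of_real 0))) (of_real beta) < e) (at_right 1)"
    unfolding eventually_at_right_field
  proof (intro exI[of _ "P t"] conjI allI impI)
    show "1 < P t" using P_gt1[OF tb] .
    fix r assume r: "1 < r" "r < P t"
    obtain x where x: "beta < x" "P x = r" using P_surj[OF r(1)] by blast
    have "\<psi> (of_real x) = of_real r" using psi_real[OF x(1)] x(2) by (simp add: P_def)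
    hence inv: "inv_into (Ainf A) \<psi> (of_real r) = of_real x"
      using psi_inj ray_Ainf[OF x(1)] by (intro inv_into_f_eq) auto
    have "x < t"
    proof (rule ccontr)
      assume "\<not> x < t"
      hence "t = x \<or> t < x" by auto
      hence "P t \<le> P x" using P_mono[OF tb] by force
      thus False using r x by simp
    qed
    hence "dist (complex_of_real x) (of_real beta) < e" using x(1) by (simp add: dist_norm t_def flip: of_real_diff)
    thus "dist (inv_into (Ainf A) \<psi> (of_real r * exp (2 * pi * \<i> * of_real 0))) (of_real beta) < e"
      using inv by simp
  qed
qed

end



locale cubphi = cub +
  fixes \<phi> :: "complex \<Rightarrow> complex"
  assumes bphi: "is_boettcher0 (complex_of_real a) \<phi>"
begin

lemma phi_hol: "\<phi> holomorphic_on A1 A" using bphi by (simp add: is_boettcher0_def)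

lemma phi_cont: "continuous_on (A1 A) \<phi>"
  using phi_hol by (rule holomorphic_on_imp_continuous_on)

lemma phi_inj: "inj_on \<phi> (A1 A)"
  using bphi by (simp add: is_boettcher0_def bij_betw_def)

lemma phi_norm: "z \<in> A1 A \<Longrightarrow> norm (\<phi> z) < 1"
proof -
  assume z: "z \<in> A1 A"
  have "\<phi> ` A1 A = ball 0 1" using bphi unfolding is_boettcher0_def bij_betw_def by auto
  hence "\<phi> z \<in> ball 0 1" using z by blast
  thus ?thesis by simp
qed

lemma phi_eq: "z \<in> A1 A \<Longrightarrow> \<phi> (F z) = \<phi> z ^ 2"
  using bphi unfolding is_boettcher0_def by auto

lemma zero_A1: "0 \<in> A1 A" using seg_A1[of 0] beta_pos by simp

lemma phi0: "\<phi> 0 = 0"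
proof -
  have "F 0 = 0" by (simp add: fa_def)
  hence e: "\<phi> 0 = \<phi> 0 ^ 2" using phi_eq[OF zero_A1] by simp
  have "\<phi> 0 * (\<phi> 0 - 1) = 0" using e by (simp add: power2_eq_square algebra_simps)
  hence "\<phi> 0 = 0 \<or> \<phi> 0 = 1" by auto
  thus ?thesis using phi_norm[OF zero_A1] by auto
qed

lemma phi_nz: "z \<in> A1 A \<Longrightarrow> z \<noteq> 0 \<Longrightarrow> \<phi> z \<noteq> 0"
  using phi_inj zero_A1 phi0 by (metis inj_onD)

lemma seg_nz: "0 < x \<Longrightarrow> x < beta \<Longrightarrow> \<phi> (of_real x) \<noteq> 0"
  using phi_nz seg_A1 by simp

lemma orbit_le: "0 < x \<Longrightarrow> x < beta \<Longrightarrow> 0 < (fr^^n) x \<and> (fr^^n) x \<le> x"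
proof -
  assume h: "0 < x" "x < beta"
  have q: "0 < x*(x+b)" "x*(x+b) < 1" using h bpos qlt by auto
  have "(x*(x+b))^n \<le> 1" using q by (intro power_le_one) auto
  hence "(x*(x+b))^n * x \<le> 1 * x" using h by (intro mult_right_mono) auto
  thus ?thesis using iter_small[OF h, of n] by simp
qed

lemma phi_iter: "0 < x \<Longrightarrow> x < beta \<Longrightarrow> \<phi> (of_real ((fr^^n) x)) = \<phi> (of_real x) ^ (2^n)"
proof (induction n)
  case 0 then show ?case by simp
next
  case (Suc n)
  have m: "0 \<le> (fr^^n) x" "(fr^^n) x < beta" using orbit_le[OF Suc.prems, of n] Suc.prems by auto
  have "\<phi> (of_real ((fr^^Suc n) x)) = \<phi> (F (of_real ((fr^^n) x)))" by (simp add: F_real)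
  also have "\<dots> = \<phi> (of_real ((fr^^n) x)) ^ 2" using seg_A1[OF m] by (rule phi_eq)
  also have "\<dots> = \<phi> (of_real x) ^ (2^Suc n)" using Suc by (simp add: power_mult[symmetric] mult.commute)
  finally show ?case .
qed

definition c :: complex where "c = deriv \<phi> 0"

lemma c_nz: "c \<noteq> 0"
  unfolding c_def using phi_hol A1_open phi_inj zero_A1 by (rule holomorphic_injective_imp_regular)

lemma phi_deriv: "(\<phi> has_field_derivative c) (at 0)"
  unfolding c_def using phi_hol A1_open zero_A1 by (rule holomorphic_derivI)

lemma ofreal_filter: "filterlim (\<lambda>x::real. complex_of_real x) (at 0) (at_right 0)"
proof -
  have "((\<lambda>x::real. complex_of_real x) \<longlongrightarrow> of_real 0) (at_right 0)"
    by (intro tendsto_of_real tendsto_ident_at)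
  moreover have "eventually (\<lambda>x::real. complex_of_real x \<in> UNIV \<and> complex_of_real x \<noteq> 0) (at_right 0)"
    by (simp add: eventually_at_right_field) (auto intro: exI[of _ 1])
  ultimately show ?thesis by (simp add: filterlim_at)
qed

lemma g_lim: "((\<lambda>x. \<phi> (of_real x) / of_real x) \<longlongrightarrow> c) (at_right 0)"
proof -
  have "((\<lambda>y. (\<phi> y - \<phi> 0) / (y - 0)) \<longlongrightarrow> c) (at 0)"
    using phi_deriv by (simp add: has_field_derivative_iff)
  hence "((\<lambda>y. \<phi> y / y) \<longlongrightarrow> c) (at 0)" by (simp add: phi0)
  thus ?thesis by (rule filterlim_compose[OF _ ofreal_filter])
qed

lemma fr_filter: "filterlim fr (at_right 0) (at_right 0)"
proof -
  have "(fr \<longlongrightarrow> fr 0) (at_right 0)"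
    unfolding fr_def by (intro tendsto_intros)
  hence "(fr \<longlongrightarrow> 0) (at_right 0)" by (simp add: fr_def)
  moreover have "eventually (\<lambda>x. fr x \<in> {0<..} \<and> fr x \<noteq> 0) (at_right 0)"
    unfolding eventually_at_right_field by (intro exI[of _ 1]) (auto dest: fr_pos)
  ultimately show ?thesis by (simp add: filterlim_at)
qed

lemma c_eq: "c = of_real b"
proof -
  define g where "g x = \<phi> (of_real x) / of_real x" for x
  have l1: "((\<lambda>x. g (fr x)) \<longlongrightarrow> c) (at_right 0)"
    unfolding g_def by (rule filterlim_compose[OF g_lim fr_filter])
  have l2: "((\<lambda>x. complex_of_real (x + b)) \<longlongrightarrow> of_real (0 + b)) (at_right 0)"
    by (intro tendsto_intros)
  have "((\<lambda>x. g (fr x) * complex_of_real (x + b)) \<longlongrightarrow> c * of_real (0 + b)) (at_right 0)"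
    by (rule tendsto_mult[OF l1 l2])
  moreover have "eventually (\<lambda>x. g (fr x) * complex_of_real (x + b) = g x ^ 2) (at_right 0)"
    unfolding eventually_at_right_field
  proof (intro exI[of _ beta] conjI allI impI)
    show "0 < beta" by (rule beta_pos)
    fix x assume x: "0 < x" "x < beta"
    have fx: "\<phi> (of_real (fr x)) = \<phi> (of_real x) ^ 2"
      using phi_eq[OF seg_A1[of x]] x by (simp add: F_real)
    define u where "u = complex_of_real x"
    define v where "v = complex_of_real (x + b)"
    define p where "p = \<phi> u"
    have w: "complex_of_real (fr x) = u^2 * v" by (simp add: fr_def u_def v_def)
    have vnz: "v \<noteq> 0" unfolding v_def using x bpos by (simp only: of_real_eq_0_iff)
    have unz: "u \<noteq> 0" unfolding u_def using x by simp
    have "g (fr x) = p^2 / (u^2 * v)" unfolding g_def using fx w by (simp add: p_def u_def)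
    hence "g (fr x) * v = p^2 / u^2" using vnz unz by simp
    also have "\<dots> = g x ^ 2" by (simp add: g_def p_def u_def power_divide)
    finally show "g (fr x) * complex_of_real (x + b) = g x ^ 2" by (simp add: v_def)
  qed
  ultimately have "((\<lambda>x. g x ^ 2) \<longlongrightarrow> c * of_real b) (at_right 0)"
    by (simp add: tendsto_cong)
  moreover have "((\<lambda>x. g x ^ 2) \<longlongrightarrow> c ^ 2) (at_right 0)"
    unfolding g_def by (intro tendsto_intros g_lim)
  ultimately have "c * of_real b = c ^ 2"
    using tendsto_unique[OF trivial_limit_at_right_real] by blast
  thus ?thesis using c_nz by (simp add: power2_eq_square)
qed

end



context cubphi begin

lemma phi_sector: "\<exists>e>0. e \<le> beta \<and> (\<forall>x. 0 < x \<longrightarrow> x < e \<longrightarrow> \<bar>Arg (\<phi> (of_real x))\<bar> < pi / 4)"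
proof -
  have "((\<lambda>x. Arg (\<phi> (of_real x) / of_real x)) \<longlongrightarrow> Arg (of_real b)) (at_right 0)"
    using g_lim unfolding c_eq by (intro tendsto_Arg) (use bpos in \<open>auto simp: nonpos_Reals_def\<close>)
  hence "eventually (\<lambda>x. dist (Arg (\<phi> (of_real x) / of_real x)) 0 < pi / 4) (at_right 0)"
    using bpos by (intro tendstoD) auto
  moreover have "eventually (\<lambda>x::real. x > 0) (at_right 0)" by (simp add: eventually_at_right_field) (auto intro: exI[of _ 1])
  ultimately have "eventually (\<lambda>x. \<bar>Arg (\<phi> (of_real x))\<bar> < pi / 4) (at_right 0)"
    by eventually_elim (simp add: dist_real_def)
  then obtain e where e: "e > 0" "\<And>x. 0 < x \<Longrightarrow> x < e \<Longrightarrow> \<bar>Arg (\<phi> (of_real x))\<bar> < pi / 4"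
    unfolding eventually_at_right_field by auto
  show ?thesis using e beta_pos by (intro exI[of _ "min e beta"]) auto
qed

lemma phi_real_near:
  obtains e where "0 < e" "e \<le> beta" "\<And>x. 0 < x \<Longrightarrow> x < e \<Longrightarrow> \<phi> (of_real x) = of_real (norm (\<phi> (of_real x)))"
proof -
  obtain e where e: "e > 0" "e \<le> beta" "\<And>x. 0 < x \<Longrightarrow> x < e \<Longrightarrow> \<bar>Arg (\<phi> (of_real x))\<bar> < pi / 4"
    using phi_sector by blast
  have "\<phi> (of_real x) = of_real (norm (\<phi> (of_real x)))" if x: "0 < x" "x < e" for x
  proof -
    have xb: "x < beta" using x e by simp
    have it: "Arg (\<phi> (of_real ((fr^^n) x))) = 2^n * Arg (\<phi> (of_real x))" for n
    proof (induction n)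
      case 0 then show ?case by simp
    next
      case (Suc n)
      have o: "0 < (fr^^n) x" "(fr^^n) x \<le> x" using orbit_le[OF x(1) xb] by auto
      have "\<phi> (of_real ((fr^^Suc n) x)) = \<phi> (of_real ((fr^^n) x)) ^ 2"
        using phi_iter[OF x(1) xb, of "Suc n"] phi_iter[OF x(1) xb, of n] by (simp add: power_mult[symmetric] mult.commute)
      hence "Arg (\<phi> (of_real ((fr^^Suc n) x))) = real 2 * Arg (\<phi> (of_real ((fr^^n) x)))"
        using Arg_pow[of "\<phi> (of_real ((fr^^n) x))" 2] seg_nz[of "(fr^^n) x"] e(3)[of "(fr^^n) x"] o x xb by simp
      thus ?case using Suc by simp
    qed
    have "\<bar>(2::real) ^ n * Arg (\<phi> (of_real x))\<bar> < pi / 4" for n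
      using e(3)[of "(fr^^n) x"] orbit_le[OF x(1) xb, of n] x it[of n] by simp
    hence "Arg (\<phi> (of_real x)) = 0" by (rule Arg_zero_all) simp
    thus ?thesis using seg_nz[OF x(1) xb] real_pos_of_Arg0 by blast
  qed
  thus ?thesis using e that by blast
qed

lemma phi_ofreal_cont: "t < beta \<Longrightarrow> continuous_on {0..t} (\<lambda>y. \<phi> (of_real y))"
proof -
  assume t: "t < beta"
  have "complex_of_real ` {0..t} \<subseteq> A1 A" using t seg_A1 by auto
  thus ?thesis
    by (intro continuous_on_compose2[OF phi_cont continuous_on_of_real[OF continuous_on_id]]) auto
qed

lemma phi_real: assumes x: "0 < x" "x < beta" shows "\<phi> (of_real x) = of_real (norm (\<phi> (of_real x)))"
proof -
  obtain e where e: "0 < e" "e \<le> beta" "\<And>x. 0 < x \<Longrightarrow> x < e \<Longrightarrow> \<phi> (of_real x) = of_real (norm (\<phi> (of_real x)))"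
    using phi_real_near by blast
  have "(\<lambda>n. (fr^^n) x) \<longlonglongrightarrow> 0" using iter_small_lim x by simp
  hence "eventually (\<lambda>n. (fr^^n) x < e) sequentially"
    using e(1) by (intro order_tendstoD) auto
  then obtain n where n: "(fr^^n) x < e" by (auto simp: eventually_sequentially)
  define h where "h y = \<phi> (of_real y) / of_real (norm (\<phi> (of_real y)))" for y
  have hroot: "h y ^ (2^n) = 1" if y: "y \<in> {0<..x}" for y
  proof -
    have yb: "0 < y" "y < beta" using y x by auto
    have "(fr^^n) y \<le> (fr^^n) x" using iter_mono[of y x n] y by simp
    hence le: "(fr^^n) y < e" using n by simp
    have "h y ^ (2^n) = \<phi> (of_real y) ^ (2^n) / of_real (norm (\<phi> (of_real y) ^ (2^n)))"
      by (simp add: h_def power_divide norm_power)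
    also have "\<dots> = \<phi> (of_real ((fr^^n) y)) / of_real (norm (\<phi> (of_real ((fr^^n) y))))"
      using phi_iter[OF yb, of n] by simp
    also have "\<dots> = 1"
      using e(3)[of "(fr^^n) y"] le orbit_le[OF yb, of n] seg_nz[of "(fr^^n) y"] e(2)
      by (intro div_norm1) auto
    finally show ?thesis .
  qed
  have c0: "continuous_on {0<..x} (\<lambda>y. \<phi> (of_real y))"
    by (rule continuous_on_subset[OF phi_ofreal_cont[OF x(2)]]) (simp add: subset_eq)
  have cont: "continuous_on {0<..x} h"
    unfolding h_def using seg_nz x
    by (intro continuous_intros c0) auto
  have fin: "finite (h ` {0<..x})"
    by (rule finite_subset[OF _ finite_roots_unity[of "2^n"]]) (use hroot in auto)
  have "h constant_on {0<..x}"
    by (rule continuous_finite_range_constant[OF connected_Ioc cont fin])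
  moreover have "h (min x (e/2)) = 1"
    using e(3)[of "min x (e/2)"] seg_nz[of "min x (e/2)"] e(1,2) x unfolding h_def
    by (intro div_norm1) auto
  moreover have "min x (e/2) \<in> {0<..x}" using x e by auto
  ultimately have "h x = 1" unfolding constant_on_def using x by (metis greaterThanAtMost_iff order_refl)
  thus ?thesis using seg_nz[OF x] unfolding h_def by (simp add: divide_eq_1_iff)
qed

definition Q :: "real \<Rightarrow> real" where "Q x = norm (\<phi> (of_real x))"

lemma Q_cont: "t < beta \<Longrightarrow> continuous_on {0..t} Q"
  unfolding Q_def by (intro continuous_on_norm phi_ofreal_cont)

lemma Q0: "Q 0 = 0" by (simp add: Q_def phi0)

lemma Q_lt1: "0 \<le> x \<Longrightarrow> x < beta \<Longrightarrow> Q x < 1"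
  unfolding Q_def using phi_norm seg_A1 by blast

lemma Q_pos: "0 < x \<Longrightarrow> x < beta \<Longrightarrow> Q x > 0"
  unfolding Q_def using seg_nz by simp

lemma Q_inj: "0 \<le> x \<Longrightarrow> x < beta \<Longrightarrow> 0 \<le> y \<Longrightarrow> y < beta \<Longrightarrow> Q x = Q y \<Longrightarrow> x = y"
proof -
  assume h: "0 \<le> x" "x < beta" "0 \<le> y" "y < beta" "Q x = Q y"
  have r: "\<phi> (of_real z) = of_real (Q z)" if "0 \<le> z" "z < beta" for z
    using that phi_real[of z] phi0 by (cases "z = 0") (auto simp: Q_def)
  have "\<phi> (of_real x) = \<phi> (of_real y)" using r[OF h(1,2)] r[OF h(3,4)] h(5) by simp
  hence "complex_of_real x = of_real y" using phi_inj seg_A1 h by (meson inj_onD)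
  thus ?thesis by simp
qed

lemma Q_fr: "0 < x \<Longrightarrow> x < beta \<Longrightarrow> Q (fr x) = Q x ^ 2"
  using phi_iter[of x 1] by (simp add: Q_def norm_power)

lemma Q_mono: "0 \<le> x \<Longrightarrow> x < y \<Longrightarrow> y < beta \<Longrightarrow> Q x < Q y"
proof (rule ccontr)
  assume h: "0 \<le> x" "x < y" "y < beta" "\<not> Q x < Q y"
  hence "Q x \<noteq> Q y" using Q_inj[of x y] by auto
  hence lt: "Q y < Q x" using h by simp
  have "0 \<le> Q y" by (simp add: Q_def)
  hence "\<exists>s. 0 \<le> s \<and> s \<le> x \<and> Q s = Q y"
    using h lt Q0 by (intro IVT' Q_cont) auto
  then obtain s where "0 \<le> s" "s \<le> x" "Q s = Q y" by blast
  thus False using Q_inj[of s y] h by auto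
qed

lemma fr_surj_down: "0 < x \<Longrightarrow> x < beta \<Longrightarrow> \<exists>y. 0 < y \<and> y < beta \<and> fr y = x"
proof -
  assume x: "0 < x" "x < beta"
  have "\<exists>y. x \<le> y \<and> y \<le> beta \<and> fr y = x"
    using fr_lt[OF x] x fr_beta by (intro IVT' fr_cont) auto
  then obtain y where y: "x \<le> y" "y \<le> beta" "fr y = x" by blast
  hence "y \<noteq> beta" using x fr_beta by auto
  thus ?thesis using y x by (intro exI[of _ y]) auto
qed

lemma Q_sup: "e > 0 \<Longrightarrow> \<exists>x. 0 < x \<and> x < beta \<and> 1 - e < Q x"
proof (rule ccontr)
  assume e: "e > 0" and "\<not> (\<exists>x. 0 < x \<and> x < beta \<and> 1 - e < Q x)"
  hence le: "\<And>x. 0 < x \<Longrightarrow> x < beta \<Longrightarrow> Q x \<le> 1 - e" by force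
  have hb: "0 < beta/2" "beta/2 < beta" using beta_pos by auto
  have qp: "Q (beta/2) > 0" using Q_pos[OF hb] .
  hence e1: "e < 1" using le[OF hb] by simp
  have pw: "\<And>x. 0 < x \<Longrightarrow> x < beta \<Longrightarrow> Q x \<le> (1 - e) ^ (2^n)" for n
  proof (induction n)
    case 0 then show ?case using le by simp
  next
    case (Suc n)
    fix x assume x: "0 < x" "x < beta"
    obtain y where y: "0 < y" "y < beta" "fr y = x" using fr_surj_down[OF x] by blast
    have "Q y \<le> (1-e)^(2^n)" using Suc.IH[OF y(1,2)] .
    hence "Q y ^ 2 \<le> ((1-e)^(2^n))^2" by (intro power_mono) (auto simp: Q_def)
    also have "Q y ^ 2 = Q x" using Q_fr[OF y(1,2)] y(3) by simp
    finally show "Q x \<le> (1 - e) ^ (2^Suc n)" by (simp add: power_mult[symmetric] mult.commute)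
  qed
  obtain n where n: "(1-e)^n < Q (beta/2)" using real_arch_pow_inv[OF qp, of "1-e"] e by auto
  have "(1-e)^(2^n) \<le> (1-e)^n" using e e1 by (intro power_decreasing) (auto intro: less_imp_le[OF less_exp[of n]])
  thus False using pw[OF hb, of n] n by simp
qed

lemma Q_surj: "0 < r \<Longrightarrow> r < 1 \<Longrightarrow> \<exists>x. 0 < x \<and> x < beta \<and> Q x = r"
proof -
  assume r: "0 < r" "r < 1"
  obtain x1 where x1: "0 < x1" "x1 < beta" "r < Q x1" using Q_sup[of "1 - r"] r by auto
  have "\<exists>s. 0 \<le> s \<and> s \<le> x1 \<and> Q s = r"
    using x1 r Q0 by (intro IVT' Q_cont) auto
  then obtain s where s: "0 \<le> s" "s \<le> x1" "Q s = r" by blast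
  hence "s \<noteq> 0" using Q0 r by auto
  thus ?thesis using s x1 by (intro exI[of _ s]) auto
qed

lemma internal_land: "internal_ray_lands A \<phi> 0 (of_real beta)"
  unfolding internal_ray_lands_def
proof (subst tendsto_iff, intro allI impI)
  fix e :: real assume e: "e > 0"
  define t where "t = max (beta/2) (beta - e / 2)"
  have tb: "0 < t" "t < beta" using e beta_pos by (auto simp: t_def)
  show "eventually (\<lambda>r. dist (inv_into (A1 A) \<phi> (of_real r * exp (2 * pi * \<i> * of_real 0))) (of_real beta) < e) (at_left 1)"
    unfolding eventually_at_left_field
  proof (intro exI[of _ "Q t"] conjI allI impI)
    show "Q t < 1" using Q_lt1 tb by simp
    fix r assume r: "Q t < r" "r < 1"
    have r0: "0 < r" using r Q_pos[OF tb] by simp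
    obtain x where x: "0 < x" "x < beta" "Q x = r" using Q_surj[OF r0 r(2)] by blast
    have "\<phi> (of_real x) = of_real r" using phi_real[OF x(1,2)] x(3) by (simp add: Q_def)
    hence inv: "inv_into (A1 A) \<phi> (of_real r) = of_real x"
      using phi_inj seg_A1[of x] x by (intro inv_into_f_eq) auto
    have "t < x"
    proof (rule ccontr)
      assume "\<not> t < x"
      hence "x = t \<or> x < t" by auto
      hence "Q x \<le> Q t" using Q_mono[of x t] x tb by force
      thus False using r x by simp
    qed
    hence "dist (complex_of_real x) (of_real beta) < e" using x(2) e
      by (simp add: dist_norm t_def flip: of_real_diff)
    thus "dist (inv_into (A1 A) \<phi> (of_real r * exp (2 * pi * \<i> * of_real 0))) (of_real beta) < e"
      using inv by simp
  qed
qed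

end


theorem lemma2p4:
  fixes a :: real and \<phi> \<psi> :: "complex \<Rightarrow> complex"
  assumes "a > 0"
    and "- complex_of_real a \<notin> A1 (of_real a) \<union> Ainf (of_real a)"
    and "is_boettcher0 (of_real a) \<phi>"
    and "is_boettcher_inf (of_real a) \<psi>"
  shows "\<exists>w. external_ray_lands (of_real a) \<psi> 0 w \<and> internal_ray_lands (of_real a) \<phi> 0 w"
proof -
  interpret P1: cubpsi a \<psi> using assms(1,4) by unfold_locales auto
  interpret P2: cubphi a \<phi> using assms(1,3) by unfold_locales auto
  show ?thesis using P1.external_land P2.internal_land by blast
qed

end
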